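(* Let $r\ge2$ and let $\mathcal{P}$ be a set of $r$-patterns such that the family of all $\mathcal{P}$-cliques is reconstructible. Then there is a constant $C>0$ such that a.a.s. $z_{\mathcal{P}}(\mathbb{RM}_n^{(r)})\le C n^{1/r}$.
   Context: An ordered $r$-matching of size $k$ is a set of $k$ pairwise disjoint $r$-element subsets (edges) of a linearly ordered vertex set of size $rk$; $\mathbb{RM}^{(r)}_n$ is a uniformly random ordered $r$-matching on $[rn]$. An $r$-pattern is an ordered $r$-matching of size 2 (written as a word over $\{A,B\}$, each letter $r$ times). For a set $\mathcal P$ of $r$-patterns, a $\mathcal P$-clique is an ordered matching all of whose pairs of edges form patterns in $\mathcal P$ (i.e., induce matchings order-isomorphic to members of $\mathcal P$), and $z_{\mathcal P}(M)$ is the largest size of a $\mathcal P$-clique contained in $M$. The trace $\mathrm{tr}(M)$ of an ordered $r$-matching $M$ is the word over $[r]$ obtained by writing, at each vertex (in the vertex order), the number $i$ if that vertex is the $i$-th vertex (from the left) of its edge. A family $\mathcal F$ of ordered matchings is reconstructible if no two distinct members of $\mathcal F$ on the same ordered vertex set have the same trace. "A.a.s." means with probability tending to 1 as $n\to\infty$. *)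

theory Defs
  imports Complex_Main
begin

definition ordered_matching :: "nat \<Rightarrow> nat \<Rightarrow> nat set set \<Rightarrow> bool" where
  "ordered_matching r k M \<longleftrightarrow>
     (\<forall>e\<in>M. card e = r \<and> e \<subseteq> {0..<r*k}) \<and>
     (\<forall>e\<in>M. \<forall>f\<in>M. e \<noteq> f \<longrightarrow> e \<inter> f = {}) \<and>
     \<Union>M = {0..<r*k} \<and> finite M \<and> card M = k"

text \<open>All ordered r-matchings of size n; RM_n^(r) is uniform on this set.\<close>
definition matchings :: "nat \<Rightarrow> nat \<Rightarrow> nat set set set" where
  "matchings r n = {M. ordered_matching r n M}"

definition patterns :: "nat \<Rightarrow> nat set set set" where
  "patterns r = matchings r 2"

definition rank :: "nat set \<Rightarrow> nat \<Rightarrow> nat" where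
  "rank S x = card {y\<in>S. y < x}"

definition induced_pattern :: "nat set \<Rightarrow> nat set \<Rightarrow> nat set set" where
  "induced_pattern e f = {rank (e \<union> f) ` e, rank (e \<union> f) ` f}"

definition is_clique :: "nat set set set \<Rightarrow> nat set set \<Rightarrow> bool" where
  "is_clique P N \<longleftrightarrow> (\<forall>e\<in>N. \<forall>f\<in>N. e \<noteq> f \<longrightarrow> induced_pattern e f \<in> P)"

definition z :: "nat set set set \<Rightarrow> nat set set \<Rightarrow> nat" where
  "z P M = Max {card N | N. N \<subseteq> M \<and> is_clique P N}"

text \<open>Trace of an ordered r-matching on {0..<m}: at vertex v write i if v is the
  i-th vertex (from the left, 1-based) of its edge.\<close>
definition trace :: "nat \<Rightarrow> nat set set \<Rightarrow> nat list" where
  "trace m M = map (\<lambda>v. Suc (card {u \<in> (THE e. e \<in> M \<and> v \<in> e). u < v})) [0..<m]"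

definition clique_family_reconstructible :: "nat \<Rightarrow> nat set set set \<Rightarrow> bool" where
  "clique_family_reconstructible r P \<longleftrightarrow>
     (\<forall>k M1 M2. ordered_matching r k M1 \<and> is_clique P M1 \<and>
                ordered_matching r k M2 \<and> is_clique P M2 \<and>
                trace (r*k) M1 = trace (r*k) M2 \<longrightarrow> M1 = M2)"

definition prob_RM :: "nat \<Rightarrow> nat \<Rightarrow> (nat set set \<Rightarrow> bool) \<Rightarrow> real" where
  "prob_RM r n Q = real (card {M \<in> matchings r n. Q M}) / real (card (matchings r n))"

end

theory Submission
  imports Defs
begin

definition pm :: "nat \<Rightarrow> nat set \<Rightarrow> nat set set set" where
  "pm r V = {M. (\<forall>e\<in>M. card e = r \<and> e \<subseteq> V) \<and> (\<forall>e\<in>M. \<forall>f\<in>M. e \<noteq> f \<longrightarrow> e \<inter> f = {}) \<and> \<Union>M = V}"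

fun g :: "nat \<Rightarrow> nat \<Rightarrow> nat" where
  "g r 0 = 1"
| "g r (Suc j) = ((r*j + r - 1) choose (r-1)) * g r j"

lemma card_Union_edges:
  assumes "r > 0" "\<forall>e\<in>N. card e = r" "\<forall>e\<in>N. \<forall>f\<in>N. e \<noteq> f \<longrightarrow> e \<inter> f = {}"
  shows "card (\<Union>N) = r * card N"
proof -
  have fin: "\<And>A. A \<in> N \<Longrightarrow> finite A" using assms by (metis card.infinite not_gr0)
  have "card (\<Union>N) = sum card N"
    by (rule card_Union_disjoint) (use assms fin in \<open>auto simp: pairwise_def disjnt_def\<close>)
  also have "\<dots> = r * card N" using assms(2) by simp
  finally show ?thesis .
qed

lemma finite_pm: "finite V \<Longrightarrow> finite (pm r V)"
  by (rule finite_subset[of _ "Pow (Pow V)"]) (auto simp: pm_def)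

lemma pm_empty: "r > 0 \<Longrightarrow> pm r {} = {{}}"
  by (auto simp: pm_def)

lemma pm_insert:
  assumes a: "e \<subseteq> V" "card e = r" "M \<in> pm r (V - e)"
  shows "insert e M \<in> pm r V"
proof -
    have Md: "\<forall>e'\<in>M. card e' = r \<and> e' \<subseteq> V - e" "\<forall>e\<in>M. \<forall>f\<in>M. e \<noteq> f \<longrightarrow> e \<inter> f = {}" "\<Union>M = V - e"
      using a by (auto simp: pm_def)
    have "\<forall>e'\<in>insert e M. \<forall>f\<in>insert e M. e' \<noteq> f \<longrightarrow> e' \<inter> f = {}"
      using Md(1,2) by blast
    moreover have "\<forall>e'\<in>insert e M. card e' = r \<and> e' \<subseteq> V" using Md(1) a by blast
    moreover have "\<Union>(insert e M) = V" using Md(3) a by blast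
    ultimately show "insert e M \<in> pm r V" unfolding pm_def by blast
qed

lemma pm_step:
  assumes "r > 0" "finite V" "x \<in> V"
  shows "pm r V = (\<Union>e\<in>{e. e \<subseteq> V \<and> card e = r \<and> x \<in> e}. insert e ` pm r (V - e))"
proof
  show "pm r V \<subseteq> (\<Union>e\<in>{e. e \<subseteq> V \<and> card e = r \<and> x \<in> e}. insert e ` pm r (V - e))"
  proof
    fix M assume M: "M \<in> pm r V"
    then obtain e where e: "e \<in> M" "x \<in> e" using assms(3) by (auto simp: pm_def)
    have Md: "\<forall>e\<in>M. card e = r \<and> e \<subseteq> V" "\<forall>e\<in>M. \<forall>f\<in>M. e \<noteq> f \<longrightarrow> e \<inter> f = {}" "\<Union>M = V"
      using M by (auto simp: pm_def)
    have "\<Union>(M - {e}) = V - e"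
    proof
      show "\<Union>(M - {e}) \<subseteq> V - e" using Md e by blast
      show "V - e \<subseteq> \<Union>(M - {e})" using Md(3) by blast
    qed
    moreover have "\<forall>f\<in>M - {e}. card f = r \<and> f \<subseteq> V - e" using Md e by blast
    ultimately have "M - {e} \<in> pm r (V - e)" using Md(2) unfolding pm_def by auto
    moreover have "M = insert e (M - {e})" using e by auto
    moreover have "e \<subseteq> V \<and> card e = r \<and> x \<in> e" using M e by (auto simp: pm_def)
    ultimately show "M \<in> (\<Union>e\<in>{e. e \<subseteq> V \<and> card e = r \<and> x \<in> e}. insert e ` pm r (V - e))"
      by blast
  qed
next
  show "(\<Union>e\<in>{e. e \<subseteq> V \<and> card e = r \<and> x \<in> e}. insert e ` pm r (V - e)) \<subseteq> pm r V"
    using pm_insert by blast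
qed

lemma card_pm:
  assumes "r > 0"
  shows "finite V \<Longrightarrow> card V = r * j \<Longrightarrow> card (pm r V) = g r j"
proof (induction j arbitrary: V)
  case 0
  then have "V = {}" by auto
  then show ?case using pm_empty[OF assms] by simp
next
  case (Suc j)
  define x where "x = Min V"
  have "V \<noteq> {}" using Suc.prems assms by auto
  then have x: "x \<in> V" using Suc.prems x_def by auto
  define E where "E = {e. e \<subseteq> V \<and> card e = r \<and> x \<in> e}"
  have finE: "finite E" unfolding E_def using Suc.prems by auto
  have eq: "pm r V = (\<Union>e\<in>E. insert e ` pm r (V - e))"
    using pm_step[OF assms Suc.prems(1) x] E_def by simp
  have each: "card (insert e ` pm r (V - e)) = g r j" if "e \<in> E" for e
  proof -
    have ef: "finite e" "e \<subseteq> V" "card e = r" "x \<in> e" using that Suc.prems E_def finite_subset by auto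
    have "e \<notin> M" if "M \<in> pm r (V - e)" for M
      using that ef by (auto simp: pm_def)
    then have "inj_on (insert e) (pm r (V - e))"
      unfolding inj_on_def by (metis insert_ident)
    then have "card (insert e ` pm r (V - e)) = card (pm r (V - e))" by (rule card_image)
    also have "\<dots> = g r j"
      using Suc.IH[of "V - e"] Suc.prems ef by (simp add: card_Diff_subset)
    finally show ?thesis .
  qed
  have "card (pm r V) = (\<Sum>e\<in>E. card (insert e ` pm r (V - e)))"
    unfolding eq
  proof (rule card_UN_disjoint[OF finE])
    show "\<forall>i\<in>E. finite (insert i ` pm r (V - i))" using finite_pm Suc.prems by auto
    show "\<forall>i\<in>E. \<forall>j\<in>E. i \<noteq> j \<longrightarrow> insert i ` pm r (V - i) \<inter> insert j ` pm r (V - j) = {}"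
    proof (intro ballI impI)
      fix i j assume ij: "i \<in> E" "j \<in> E" "i \<noteq> j"
      show "insert i ` pm r (V - i) \<inter> insert j ` pm r (V - j) = {}"
      proof (rule ccontr)
        assume "insert i ` pm r (V - i) \<inter> insert j ` pm r (V - j) \<noteq> {}"
        then obtain M1 M2 where m: "M1 \<in> pm r (V - i)" "M2 \<in> pm r (V - j)" "insert i M1 = insert j M2"
          by blast
        then have "i \<in> M2" using ij by blast
        then have "i \<subseteq> V - j" using m(2) by (auto simp: pm_def)
        then show False using ij E_def by auto
      qed
    qed
  qed
  also have "\<dots> = card E * g r j" using each by simp
  also have "card E = (r*j + r - 1) choose (r - 1)"
  proof -
    have "bij_betw (\<lambda>e. e - {x}) E {B. B \<subseteq> V - {x} \<and> card B = r - 1}"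
    proof (rule bij_betw_byWitness[where f'="insert x"])
      show "\<forall>a\<in>E. insert x (a - {x}) = a" using E_def by auto
      show "\<forall>a'\<in>{B. B \<subseteq> V - {x} \<and> card B = r - 1}. insert x a' - {x} = a'" by auto
      show "(\<lambda>e. e - {x}) ` E \<subseteq> {B. B \<subseteq> V - {x} \<and> card B = r - 1}"
        using E_def by auto
      show "insert x ` {B. B \<subseteq> V - {x} \<and> card B = r - 1} \<subseteq> E"
      proof
        fix e assume "e \<in> insert x ` {B. B \<subseteq> V - {x} \<and> card B = r - 1}"
        then obtain B where B: "B \<subseteq> V - {x}" "card B = r - 1" "e = insert x B" by auto
        have "finite B" using B Suc.prems finite_subset by blast
        then have "card e = r" using B assms by (subst B(3), subst card_insert_disjoint) auto
        then show "e \<in> E" using B x E_def by auto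
      qed
    qed
    then have "card E = card {B. B \<subseteq> V - {x} \<and> card B = r - 1}" by (rule bij_betw_same_card)
    also have "\<dots> = card (V - {x}) choose (r - 1)" using n_subsets Suc.prems by blast
    also have "card (V - {x}) = r*j + r - 1" using Suc.prems x by simp
    finally show ?thesis .
  qed
  finally show ?case by simp
qed

lemma g_fact: "r > 0 \<Longrightarrow> g r j * fact r ^ j * fact j = (fact (r*j) :: nat)"
proof (induction j)
  case 0 then show ?case by simp
next
  case (Suc j)
  have b: "fact (r-1) * fact (r*j) * ((r*j + r - 1) choose (r-1)) = (fact (r*j+r-1) :: nat)"
    using binomial_fact_lemma[of "r-1" "r*j+r-1"] Suc.prems by simp
  have fr: "(fact r :: nat) = r * fact (r-1)" using Suc.prems by (cases r) auto
  have f2: "(fact (r*j+r) :: nat) = (r*j+r) * fact (r*j+r-1)"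
    using Suc.prems fact_reduce[of "r*j+r", where 'a=nat] by simp
  have "g r (Suc j) * fact r ^ Suc j * fact (Suc j)
      = ((r*j + r - 1) choose (r-1)) * fact r * (Suc j) * (g r j * fact r ^ j * fact j)"
    by (simp add: algebra_simps)
  also have "\<dots> = ((r*j + r - 1) choose (r-1)) * (r * fact (r-1)) * (Suc j) * fact (r*j)"
    using Suc.IH Suc.prems fr by simp
  also have "\<dots> = (r*j+r) * (fact (r-1) * fact (r*j) * ((r*j + r - 1) choose (r-1)))"
    by (simp add: algebra_simps)
  also have "\<dots> = fact (r * Suc j)" using b f2 by (simp add: algebra_simps)
  finally show ?case .
qed

lemma g_pos: "r > 0 \<Longrightarrow> g r j > 0"
  using g_fact[of r j] by (metis fact_nonzero mult_is_0 neq0_conv)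

lemma matchings_pm:
  assumes "r > 0" shows "matchings r n = pm r {0..<r*n}"
proof
  show "matchings r n \<subseteq> pm r {0..<r*n}"
    by (auto simp: matchings_def ordered_matching_def pm_def)
  show "pm r {0..<r*n} \<subseteq> matchings r n"
  proof
    fix M assume M: "M \<in> pm r {0..<r*n}"
    have fin: "finite M" by (rule finite_subset[of _ "Pow {0..<r*n}"]) (use M in \<open>auto simp: pm_def\<close>)
    have "card (\<Union>M) = r * card M" using M assms by (intro card_Union_edges) (auto simp: pm_def)
    then have "card M = n" using M assms by (auto simp: pm_def)
    then show "M \<in> matchings r n" using M fin by (auto simp: matchings_def ordered_matching_def pm_def)
  qed
qed

lemma count_sup:
  assumes r: "r > 0" and N: "\<forall>e\<in>N. card e = r \<and> e \<subseteq> W" "\<forall>e\<in>N. \<forall>f\<in>N. e \<noteq> f \<longrightarrow> e \<inter> f = {}"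
  shows "card {M \<in> pm r W. N \<subseteq> M} = card (pm r (W - \<Union>N))"
proof -
have "bij_betw (\<lambda>M. M - N) {M \<in> pm r W. N \<subseteq> M} (pm r (W - \<Union>N))"
proof (rule bij_betw_byWitness[where f'="\<lambda>M. M \<union> N"])
  show "\<forall>a\<in>{M \<in> pm r W. N \<subseteq> M}. a - N \<union> N = a" by auto
  show "\<forall>a'\<in>pm r (W - \<Union> N). (a' \<union> N) - N = a'"
  proof
    fix M assume M: "M \<in> pm r (W - \<Union> N)"
    have "M \<inter> N = {}"
    proof (rule ccontr)
      assume "M \<inter> N \<noteq> {}"
      then obtain f where f: "f \<in> M" "f \<in> N" by blast
      then have "f \<subseteq> W - \<Union>N" "card f = r" using M by (auto simp: pm_def)
      then have "f = {}" using f by auto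
      then show False using \<open>card f = r\<close> r by simp
    qed
    then show "(M \<union> N) - N = M" by auto
  qed
  show "(\<lambda>M. M - N) ` {M \<in> pm r W. N \<subseteq> M} \<subseteq> pm r (W - \<Union> N)"
  proof clarify
    fix M assume M: "M \<in> pm r W" "N \<subseteq> M"
    have Md: "\<forall>e\<in>M. card e = r \<and> e \<subseteq> W" "\<forall>e\<in>M. \<forall>f\<in>M. e \<noteq> f \<longrightarrow> e \<inter> f = {}" "\<Union>M = W"
      using M by (auto simp: pm_def)
    have dj: "f \<inter> \<Union>N = {}" if "f \<in> M - N" for f
    proof -
      have "f \<inter> e = {}" if "e \<in> N" for e
        using Md(2) \<open>f \<in> M - N\<close> that M(2) by (metis DiffD1 DiffD2 subsetD)
      then show ?thesis by blast
    qed
    have "\<forall>f\<in>M - N. card f = r \<and> f \<subseteq> W - \<Union>N"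
    proof
      fix f assume f: "f \<in> M - N"
      then show "card f = r \<and> f \<subseteq> W - \<Union>N" using dj[OF f] Md(1) by blast
    qed
    moreover have "\<Union>(M - N) = W - \<Union>N"
    proof
      show "\<Union>(M - N) \<subseteq> W - \<Union>N" using dj Md(3) by blast
      show "W - \<Union>N \<subseteq> \<Union>(M - N)" using Md(3) by blast
    qed
    ultimately show "M - N \<in> pm r (W - \<Union> N)" using Md(2) unfolding pm_def by blast
  qed
  show "(\<lambda>M. M \<union> N) ` pm r (W - \<Union> N) \<subseteq> {M \<in> pm r W. N \<subseteq> M}"
  proof -
    have "M \<union> N \<in> pm r W" if M: "M \<in> pm r (W - \<Union> N)" for M
    proof -
    have Md: "\<forall>e\<in>M. card e = r \<and> e \<subseteq> W - \<Union>N" "\<forall>e\<in>M. \<forall>f\<in>M. e \<noteq> f \<longrightarrow> e \<inter> f = {}" "\<Union>M = W - \<Union>N"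
      using M by (auto simp: pm_def)
    have "\<forall>e\<in>M \<union> N. card e = r \<and> e \<subseteq> W" using Md(1) N(1) by blast
    moreover have "\<forall>e\<in>M \<union> N. \<forall>f\<in>M \<union> N. e \<noteq> f \<longrightarrow> e \<inter> f = {}"
    proof (intro ballI impI)
      fix e f assume ef: "e \<in> M \<union> N" "f \<in> M \<union> N" "e \<noteq> f"
      have x: "a \<inter> b = {}" if "a \<in> M" "b \<in> N" for a b using Md(1) that by blast
      show "e \<inter> f = {}"
        using ef Md(2) N(2) x[of e f] x[of f e] by blast
    qed
    moreover have "\<Union>(M \<union> N) = W" using Md(3) N(1) by blast
    ultimately show "M \<union> N \<in> pm r W" unfolding pm_def by blast
    qed
    then show ?thesis by auto
  qed
qed
then show ?thesis by (rule bij_betw_same_card)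
qed

lemma rank_strict:
  assumes "finite S" "x \<in> S" "y \<in> S" "x < y" shows "rank S x < rank S y"
  unfolding rank_def
proof (rule psubset_card_mono)
  show "finite {z \<in> S. z < y}" using assms by auto
  show "{z \<in> S. z < x} \<subset> {z \<in> S. z < y}" using assms by auto
qed

lemma rank_inj: "finite S \<Longrightarrow> inj_on (rank S) S"
  by (rule inj_onI) (metis linorder_neq_iff rank_strict less_irrefl)

lemma rank_image: assumes "finite S" shows "rank S ` S = {0..<card S}"
proof -
  have "rank S x < card S" if "x \<in> S" for x
    unfolding rank_def using assms that by (intro psubset_card_mono) auto
  then have sub: "rank S ` S \<subseteq> {0..<card S}" by auto
  have "card (rank S ` S) = card S" using card_image[OF rank_inj[OF assms]] .
  then show ?thesis using sub by (intro card_subset_eq) auto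
qed

lemma rank_transport:
  fixes h :: "nat \<Rightarrow> nat"
  assumes fin: "finite S" and h: "\<forall>a\<in>S. \<forall>b\<in>S. a < b \<longrightarrow> h a < h b"
    and T: "T \<subseteq> S" and x: "x \<in> S"
  shows "rank (h ` T) (h x) = rank T x"
proof -
  have inj: "inj_on h S" using h by (intro inj_onI) (metis linorder_neq_iff less_irrefl)
  have "{y \<in> h ` T. y < h x} = h ` {y \<in> T. y < x}"
  proof
    show "h ` {y \<in> T. y < x} \<subseteq> {y \<in> h ` T. y < h x}" using h T x by auto
    show "{y \<in> h ` T. y < h x} \<subseteq> h ` {y \<in> T. y < x}"
    proof
      fix y assume "y \<in> {y \<in> h ` T. y < h x}"
      then obtain t where t: "t \<in> T" "y = h t" "h t < h x" by auto
      have "t < x"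
      proof (rule ccontr)
        assume "\<not> t < x"
        then have "t = x \<or> x < t" by auto
        then show False using h t T x by (metis less_asym subsetD less_irrefl)
      qed
      then show "y \<in> h ` {y \<in> T. y < x}" using t by auto
    qed
  qed
  then have "rank (h ` T) (h x) = card (h ` {y \<in> T. y < x})" unfolding rank_def by simp
  also have "\<dots> = card {y \<in> T. y < x}"
    by (rule card_image) (rule inj_on_subset[OF inj], use T in auto)
  finally show ?thesis unfolding rank_def .
qed

lemma induced_transport:
  fixes h :: "nat \<Rightarrow> nat"
  assumes fin: "finite S" and h: "\<forall>a\<in>S. \<forall>b\<in>S. a < b \<longrightarrow> h a < h b"
    and ef: "e \<union> f \<subseteq> S"
  shows "induced_pattern (h ` e) (h ` f) = induced_pattern e f"
proof -
  have u: "h ` e \<union> h ` f = h ` (e \<union> f)" by auto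
  have "rank (h ` (e \<union> f)) ` h ` X = rank (e \<union> f) ` X" if "X \<subseteq> e \<union> f" for X
  proof -
    have "rank (h ` (e \<union> f)) ` h ` X = (\<lambda>x. rank (h ` (e \<union> f)) (h x)) ` X" by auto
    also have "\<dots> = rank (e \<union> f) ` X"
      using rank_transport[OF fin h ef] that ef by (intro image_cong) auto
    finally show ?thesis .
  qed
  then show ?thesis unfolding induced_pattern_def u by auto
qed

lemma trace_bound:
  assumes "ordered_matching r k M"
  shows "set (trace (r*k) M) \<subseteq> {1..r} \<and> length (trace (r*k) M) = r*k"
proof -
  have "Suc (card {u \<in> (THE e. e \<in> M \<and> v \<in> e). u < v}) \<le> r" if v: "v < r*k" for v
  proof -
    have "v \<in> \<Union>M" using assms v unfolding ordered_matching_def by auto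
    then obtain e where e: "e \<in> M" "v \<in> e" by blast
    have uniq: "\<exists>!e. e \<in> M \<and> v \<in> e"
      using e assms unfolding ordered_matching_def by blast
    have "(THE e. e \<in> M \<and> v \<in> e) = e" using uniq e by (intro the1_equality) auto
    moreover have "card e = r" using e assms unfolding ordered_matching_def by auto
    moreover have "card {u \<in> e. u < v} < card e"
    proof (rule psubset_card_mono)
      show "finite e" using \<open>card e = r\<close> e assms unfolding ordered_matching_def
        by (meson finite_atLeastLessThan finite_subset)
      show "{u \<in> e. u < v} \<subset> e" using e by auto
    qed
    ultimately show ?thesis by simp
  qed
  then show ?thesis unfolding trace_def by auto
qed

definition Kset :: "nat \<Rightarrow> nat \<Rightarrow> nat \<Rightarrow> nat set set set \<Rightarrow> nat set set set" where
  "Kset r n k P = {N. (\<forall>e\<in>N. card e = r \<and> e \<subseteq> {0..<r*n}) \<and> (\<forall>e\<in>N. \<forall>f\<in>N. e \<noteq> f \<longrightarrow> e \<inter> f = {})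
     \<and> card N = k \<and> is_clique P N}"

lemma finite_Kset: "finite (Kset r n k P)"
  by (rule finite_subset[of _ "Pow (Pow {0..<r*n})"]) (auto simp: Kset_def)

lemma Kset_props:
  assumes r: "r > 0" and N: "N \<in> Kset r n k P"
  shows "finite (\<Union>N)" "\<Union>N \<subseteq> {0..<r*n}" "card (\<Union>N) = r*k" "finite N"
    "\<forall>e\<in>N. finite e"
proof -
  show "\<Union>N \<subseteq> {0..<r*n}" using N by (auto simp: Kset_def)
  then show f: "finite (\<Union>N)" by (rule finite_subset) auto
  show "card (\<Union>N) = r*k" using N r card_Union_edges[of r N] by (auto simp: Kset_def)
  show "finite N" using f by (rule finite_UnionD)
  show "\<forall>e\<in>N. finite e" using f by (meson Union_upper finite_subset)
qed

lemma transport_N: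
  assumes r: "r > 0" and N: "N \<in> Kset r n k P"
  defines "h \<equiv> rank (\<Union>N)"
  shows "ordered_matching r k ((`) h ` N) \<and> is_clique P ((`) h ` N)"
proof -
  note pr = Kset_props[OF r N]
  let ?S = "\<Union>N"
  have inj: "inj_on h ?S" unfolding h_def by (rule rank_inj[OF pr(1)])
  have img: "h ` ?S = {0..<r*k}" unfolding h_def using rank_image[OF pr(1)] pr(3) by simp
  have hs: "\<forall>a\<in>?S. \<forall>b\<in>?S. a < b \<longrightarrow> h a < h b" unfolding h_def using rank_strict[OF pr(1)] by blast
  have Nd: "\<forall>e\<in>N. card e = r" "\<forall>e\<in>N. \<forall>f\<in>N. e \<noteq> f \<longrightarrow> e \<inter> f = {}" "card N = k" "is_clique P N"
    using N by (auto simp: Kset_def)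
  have injN: "inj_on ((`) h) N"
  proof (rule inj_onI)
    fix a b assume "a \<in> N" "b \<in> N" "h ` a = h ` b"
    then show "a = b" using inj_on_image_eq_iff[OF inj] by (meson Union_upper)
  qed
  have "\<forall>e'\<in>(`) h ` N. card e' = r \<and> e' \<subseteq> {0..<r*k}"
  proof
    fix e' assume "e' \<in> (`) h ` N"
    then obtain e where e: "e \<in> N" "e' = h ` e" by auto
    have "card e' = card e" unfolding e(2) by (rule card_image, rule inj_on_subset[OF inj]) (use e in auto)
    moreover have "e' \<subseteq> {0..<r*k}" using e img by auto
    ultimately show "card e' = r \<and> e' \<subseteq> {0..<r*k}" using Nd e by auto
  qed
  moreover have "\<forall>e'\<in>(`) h ` N. \<forall>f'\<in>(`) h ` N. e' \<noteq> f' \<longrightarrow> e' \<inter> f' = {}"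
  proof (intro ballI impI)
    fix e' f' assume a: "e' \<in> (`) h ` N" "f' \<in> (`) h ` N" "e' \<noteq> f'"
    then obtain e f where ef: "e \<in> N" "f \<in> N" "e' = h ` e" "f' = h ` f" by auto
    then have "e \<noteq> f" using a by auto
    then have "e \<inter> f = {}" using Nd ef by auto
    have "h ` (e \<inter> f) = h ` e \<inter> h ` f" by (rule inj_on_image_Int[OF inj]) (use ef in auto)
    then show "e' \<inter> f' = {}" using \<open>e \<inter> f = {}\<close> ef by simp
  qed
  moreover have "\<Union>((`) h ` N) = {0..<r*k}"
  proof -
    have "\<Union>((`) h ` N) = h ` \<Union>N" by auto
    then show ?thesis using img by simp
  qed
  moreover have "finite ((`) h ` N)" using pr(4) by auto
  moreover have "card ((`) h ` N) = k" using card_image[OF injN] Nd by simp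
  ultimately have om: "ordered_matching r k ((`) h ` N)" unfolding ordered_matching_def by blast
  have "is_clique P ((`) h ` N)"
    unfolding is_clique_def
  proof (intro ballI impI)
    fix e' f' assume a: "e' \<in> (`) h ` N" "f' \<in> (`) h ` N" "e' \<noteq> f'"
    then obtain e f where ef: "e \<in> N" "f \<in> N" "e' = h ` e" "f' = h ` f" by auto
    then have "e \<noteq> f" using a by auto
    then have "induced_pattern e f \<in> P" using Nd(4) ef unfolding is_clique_def by blast
    moreover have "induced_pattern (h ` e) (h ` f) = induced_pattern e f"
      using induced_transport[OF pr(1) hs] ef by blast
    ultimately show "induced_pattern e' f' \<in> P" using ef by simp
  qed
  then show ?thesis using om by blast
qed

lemma card_K:
  assumes r: "r > 0" and rec: "clique_family_reconstructible r P"
  shows "card (Kset r n k P) \<le> ((r*n) choose (r*k)) * r^(r*k)"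
proof -
  define \<Phi> where "\<Phi> = (\<lambda>N. (\<Union>N, trace (r*k) ((`) (rank (\<Union>N)) ` N)))"
  define B where "B = {S. S \<subseteq> {0..<r*n} \<and> card S = r*k} \<times> {xs. set xs \<subseteq> {1..r} \<and> length xs = r*k}"
  have finB: "finite B" unfolding B_def by (intro finite_cartesian_product finite_lists_length_eq) auto
  have cardB: "card B = ((r*n) choose (r*k)) * r^(r*k)"
    unfolding B_def card_cartesian_product using n_subsets[of "{0..<r*n}" "r*k"] card_lists_length_eq[of "{1..r}" "r*k"]
    by simp
  have sub: "\<Phi> ` Kset r n k P \<subseteq> B"
  proof
    fix y assume "y \<in> \<Phi> ` Kset r n k P"
    then obtain N where N: "N \<in> Kset r n k P" "y = \<Phi> N" by auto
    have "ordered_matching r k ((`) (rank (\<Union>N)) ` N)" using transport_N[OF r N(1)] by blast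
    note tb = trace_bound[OF this]
    have "\<Union>N \<subseteq> {0..<r*n}" "card (\<Union>N) = r*k" using Kset_props[OF r N(1)] by auto
    then show "y \<in> B" using tb N(2) unfolding B_def \<Phi>_def by simp
  qed
  have inj: "inj_on \<Phi> (Kset r n k P)"
  proof (rule inj_onI)
    fix N1 N2 assume a: "N1 \<in> Kset r n k P" "N2 \<in> Kset r n k P" "\<Phi> N1 = \<Phi> N2"
    then have S: "\<Union>N1 = \<Union>N2" and tr: "trace (r*k) ((`) (rank (\<Union>N1)) ` N1) = trace (r*k) ((`) (rank (\<Union>N1)) ` N2)"
      unfolding \<Phi>_def by auto
    have t1: "ordered_matching r k ((`) (rank (\<Union>N1)) ` N1) \<and> is_clique P ((`) (rank (\<Union>N1)) ` N1)"
      using transport_N[OF r a(1)] by blast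
    have t2: "ordered_matching r k ((`) (rank (\<Union>N1)) ` N2) \<and> is_clique P ((`) (rank (\<Union>N1)) ` N2)"
      using transport_N[OF r a(2)] S by simp
    have R: "\<And>k M1 M2. ordered_matching r k M1 \<Longrightarrow> is_clique P M1 \<Longrightarrow> ordered_matching r k M2 \<Longrightarrow> is_clique P M2
       \<Longrightarrow> trace (r*k) M1 = trace (r*k) M2 \<Longrightarrow> M1 = M2"
      using rec unfolding clique_family_reconstructible_def by blast
    have eq: "(`) (rank (\<Union>N1)) ` N1 = (`) (rank (\<Union>N1)) ` N2"
      by (rule R) (use t1 t2 tr in auto)
    have inj1: "inj_on (rank (\<Union>N1)) (\<Union>N1)" by (rule rank_inj[OF Kset_props(1)[OF r a(1)]])
    have injP: "inj_on ((`) (rank (\<Union>N1))) (Pow (\<Union>N1))"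
      by (rule inj_onI) (metis PowD inj_on_image_eq_iff[OF inj1])
    have "N1 \<subseteq> Pow (\<Union>N1)" "N2 \<subseteq> Pow (\<Union>N1)" using S by auto
    then show "N1 = N2" using inj_on_image_eq_iff[OF injP] eq by blast
  qed
  have "card (Kset r n k P) \<le> card B" by (rule card_inj_on_le[OF inj sub finB])
  then show ?thesis using cardB by simp
qed

lemma z_ge:
  assumes M: "finite M" and zk: "z P M \<ge> k"
  obtains N where "N \<subseteq> M" "is_clique P N" "card N = k"
proof -
  let ?X = "{card N | N. N \<subseteq> M \<and> is_clique P N}"
  have "?X \<subseteq> card ` Pow M" by auto
  moreover have "finite (card ` Pow M)" using M by simp
  ultimately have fin: "finite ?X" by (rule finite_subset)
  have "is_clique P {}" by (simp add: is_clique_def)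
  then have ne: "?X \<noteq> {}" by blast
  have "z P M \<in> ?X" unfolding z_def using Max_in[OF fin ne] .
  then obtain N0 where N0: "N0 \<subseteq> M" "is_clique P N0" "card N0 = z P M" by auto
  then obtain N where N: "N \<subseteq> N0" "card N = k" using zk obtain_subset_with_card_n by metis
  have "is_clique P N" using N0(2) N(1) unfolding is_clique_def by blast
  then show ?thesis using that N N0 by blast
qed

lemma bad_bound:
  assumes r: "r > 0"
  shows "card {M \<in> matchings r n. z P M \<ge> k} \<le> card (Kset r n k P) * g r (n - k)"
proof -
  let ?W = "{0..<r*n}"
  have sub: "{M \<in> matchings r n. z P M \<ge> k} \<subseteq> (\<Union>N\<in>Kset r n k P. {M \<in> pm r ?W. N \<subseteq> M})"
  proof
    fix M assume M: "M \<in> {M \<in> matchings r n. z P M \<ge> k}"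
    then have om: "ordered_matching r n M" "z P M \<ge> k" by (auto simp: matchings_def)
    then obtain N where N: "N \<subseteq> M" "is_clique P N" "card N = k"
      using z_ge[where M=M and P=P and k=k] by (auto simp: ordered_matching_def)
    have Md: "\<forall>e\<in>M. card e = r \<and> e \<subseteq> ?W" "\<forall>e\<in>M. \<forall>f\<in>M. e \<noteq> f \<longrightarrow> e \<inter> f = {}"
      using om(1) unfolding ordered_matching_def by auto
    have "\<forall>e\<in>N. card e = r \<and> e \<subseteq> ?W" using Md(1) N(1) by blast
    moreover have "\<forall>e\<in>N. \<forall>f\<in>N. e \<noteq> f \<longrightarrow> e \<inter> f = {}" using Md(2) N(1) by blast
    ultimately have "N \<in> Kset r n k P" using N unfolding Kset_def by blast
    moreover have "M \<in> pm r ?W" using M matchings_pm[OF r] by auto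
    ultimately show "M \<in> (\<Union>N\<in>Kset r n k P. {M \<in> pm r ?W. N \<subseteq> M})" using N by blast
  qed
  have each: "card {M \<in> pm r ?W. N \<subseteq> M} = g r (n - k)" if N: "N \<in> Kset r n k P" for N
  proof -
    have "card {M \<in> pm r ?W. N \<subseteq> M} = card (pm r (?W - \<Union>N))"
      using N by (intro count_sup[OF r]) (auto simp: Kset_def)
    also have "\<dots> = g r (n - k)"
    proof (rule card_pm[OF r])
      show "finite (?W - \<Union>N)" by simp
      have "card (?W - \<Union>N) = r*n - r*k"
        using Kset_props[OF r N] by (simp add: card_Diff_subset)
      then show "card (?W - \<Union>N) = r * (n - k)" by (simp add: diff_mult_distrib2)
    qed
    finally show ?thesis .
  qed
  have "card {M \<in> matchings r n. z P M \<ge> k} \<le> card (\<Union>N\<in>Kset r n k P. {M \<in> pm r ?W. N \<subseteq> M})"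
    by (rule card_mono[OF _ sub]) (rule finite_subset[of _ "pm r ?W"], auto simp: finite_pm)
  also have "\<dots> \<le> (\<Sum>N\<in>Kset r n k P. card {M \<in> pm r ?W. N \<subseteq> M})"
    by (rule card_UN_le[OF finite_Kset])
  also have "\<dots> = card (Kset r n k P) * g r (n - k)" using each by simp
  finally show ?thesis .
qed

lemma Kset_empty: "r > 0 \<Longrightarrow> n < k \<Longrightarrow> Kset r n k P = {}"
proof (rule ccontr)
  assume r: "r > 0" and nk: "n < k" and "Kset r n k P \<noteq> {}"
  then obtain N where N: "N \<in> Kset r n k P" by blast
  have "card (\<Union>N) \<le> card {0..<r*n}" using Kset_props[OF r N] by (intro card_mono) auto
  then have "r*k \<le> r*n" using Kset_props[OF r N] by simp
  then show False using r nk by simp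
qed

lemma succ_pow_le: "(real m + 1) ^ m \<le> exp 1 * real m ^ m"
proof (cases "m = 0")
  case True then show ?thesis by simp
next
  case False
  then have mp: "real m > 0" by simp
  have "(1 + 1 / real m) ^ m \<le> exp (1 / real m) ^ m"
    by (rule power_mono) (use exp_ge_add_one_self[of "1 / real m"] in auto)
  also have "\<dots> = exp 1" using mp by (simp add: exp_of_nat_mult[symmetric])
  finally have "(1 + 1 / real m) ^ m \<le> exp 1" .
  moreover have "(real m + 1) ^ m = (1 + 1 / real m) ^ m * real m ^ m"
    using mp by (simp add: power_mult_distrib[symmetric] field_simps)
  ultimately show ?thesis
    by (metis mult_right_mono zero_le_power of_nat_0_le_iff)
qed

lemma pow_le_exp_fact: "real m ^ m \<le> exp (real m) * fact m"
proof (induction m)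
  case 0 then show ?case by simp
next
  case (Suc m)
  have "real (Suc m) ^ Suc m = (real m + 1) * (real m + 1) ^ m" by (metis add.commute of_nat_Suc power_Suc)
  also have "\<dots> \<le> (real m + 1) * (exp 1 * real m ^ m)"
    by (rule mult_left_mono[OF succ_pow_le]) simp
  also have "\<dots> \<le> (real m + 1) * (exp 1 * (exp (real m) * fact m))"
    by (intro mult_left_mono Suc.IH) auto
  also have "\<dots> = exp (real (Suc m)) * fact (Suc m)"
    by (simp add: exp_add[symmetric] algebra_simps)
  finally show ?case .
qed

lemma fact_le_fact_pow: "k \<le> n \<Longrightarrow> (fact n :: real) \<le> fact (n - k) * real n ^ k"
proof (induction k)
  case 0 then show ?case by simp
next
  case (Suc k)
  have e: "(fact (n - k) :: real) = real (n - k) * fact (n - Suc k)"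
    using Suc.prems fact_reduce[of "n - k", where 'a=real] by (simp add: Suc_diff_Suc)
  have "(fact n :: real) \<le> fact (n - k) * real n ^ k" using Suc by simp
  also have "\<dots> = fact (n - Suc k) * real (n - k) * real n ^ k" using e by simp
  also have "\<dots> \<le> fact (n - Suc k) * real n * real n ^ k"
    by (intro mult_right_mono mult_left_mono) auto
  finally show ?case by (simp add: algebra_simps)
qed

lemma g_real: "r > 0 \<Longrightarrow> real (g r j) = fact (r*j) / (fact r ^ j * fact j)"
proof -
  assume r: "r > 0"
  have "real (g r j * fact r ^ j * fact j) = real (fact (r*j))" using g_fact[OF r] by metis
  then have "real (g r j) * fact r ^ j * fact j = fact (r*j)" by simp
  then show ?thesis by (simp add: field_simps)
qed

lemma ratio_eq:
  assumes r: "r > 0" and kn: "k \<le> n"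
  shows "real ((r*n) choose (r*k)) * real r ^ (r*k) * real (g r (n-k)) / real (g r n)
         = real r ^ (r*k) * fact r ^ k * (fact n / fact (n-k)) / fact (r*k)"
proof -
  have rk: "r*k \<le> r*n" using kn by simp
  have d: "r*n - r*k = r*(n-k)" by (simp add: diff_mult_distrib2)
  have p: "(fact r :: real) ^ n = fact r ^ k * fact r ^ (n-k)"
    using kn by (simp add: power_add[symmetric])
  show ?thesis
    unfolding binomial_fact[OF rk] g_real[OF r] d p
    by (simp add: field_simps)
qed

lemma ratio_bound:
  assumes r: "r > 0" and kn: "k \<le> n" and k: "k > 0"
  shows "real ((r*n) choose (r*k)) * real r ^ (r*k) * real (g r (n-k)) / real (g r n)
         \<le> (fact r * exp (real r) * real n / real k ^ r) ^ k"
proof -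
  have f1: "fact n / fact (n-k) \<le> real n ^ k"
    using fact_le_fact_pow[OF kn] by (simp add: divide_le_eq mult.commute)
  have f2: "real (r*k) ^ (r*k) \<le> exp (real (r*k)) * fact (r*k)" by (rule pow_le_exp_fact)
  have pos: "(0::real) < fact (r*k)" by simp
  have "real r ^ (r*k) * fact r ^ k * (fact n / fact (n-k)) / fact (r*k)
      \<le> real r ^ (r*k) * fact r ^ k * real n ^ k / fact (r*k)"
    by (intro divide_right_mono mult_left_mono f1) auto
  also have "\<dots> \<le> real r ^ (r*k) * fact r ^ k * real n ^ k * exp (real (r*k)) / real (r*k) ^ (r*k)"
  proof -
    have "1 / fact (r*k) \<le> exp (real (r*k)) / real (r*k) ^ (r*k)"
      using f2 pos r k by (simp add: field_simps)
    then show ?thesis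
      by (metis (no_types, lifting) mult_left_mono times_divide_eq_right mult.right_neutral
          zero_le_power of_nat_0_le_iff fact_ge_zero zero_le_mult_iff)
  qed
  also have "\<dots> = (fact r * exp (real r) * real n / real k ^ r) ^ k"
  proof -
    have "real (r*k) ^ (r*k) = real r ^ (r*k) * (real k ^ r) ^ k"
      by (simp add: power_mult_distrib power_mult[symmetric] mult.commute)
    moreover have "exp (real (r*k)) = exp (real r) ^ k"
      by (simp add: exp_of_nat_mult[symmetric] mult.commute)
    moreover have "real r ^ (r*k) > 0" using r by simp
    moreover have "real k ^ r > 0" using k by simp
    moreover have "real k ^ (k*r) = (real k ^ r) ^ k" by (simp add: power_mult[symmetric] mult.commute)
    ultimately show ?thesis by (simp add: power_divide power_mult_distrib field_simps)
  qed
  finally show ?thesis using ratio_eq[OF r kn] by simp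
qed

lemma q_bound:
  fixes r n k :: nat and C x :: real
  assumes r: "r > 0" and rec: "clique_family_reconstructible r P"
    and C: "C = 2 * fact r * exp (real r)" and x: "x = C * real n powr (1 / real r)"
    and k: "k = nat \<lfloor>x\<rfloor> + 1" and n: "n \<ge> 1"
  shows "real (card {M \<in> matchings r n. z P M \<ge> k}) / real (card (matchings r n))
          \<le> (1 / C) * real n powr (- 1 / real r)"
proof -
  have gA: "card (matchings r n) = g r n"
    using card_pm[OF r, of "{0..<r*n}" n] matchings_pm[OF r] by simp
  have gpos: "real (g r n) > 0" using g_pos[OF r] by simp
  have Cpos: "C > 0" using C by simp
  have C1: "C \<ge> 1"
  proof -
    have "exp (real r) \<ge> 1" by simp
    moreover have "(fact r :: real) \<ge> 1" by simp
    ultimately have "fact r * exp (real r) \<ge> (1::real)" by (metis mult_mono' mult_1 zero_le_one)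
    then show ?thesis using C by simp
  qed
  have npos: "real n > 0" using n by simp
  have xpos: "x > 0" using x Cpos npos by simp
  have kx: "real k > x" using k xpos by linarith
  have bound_pos: "(1 / C) * real n powr (- 1 / real r) = 1 / x"
    using x by (simp add: powr_minus_divide field_simps)
  show ?thesis
  proof (cases "k \<le> n")
    case False
    then have "Kset r n k P = {}" using Kset_empty[OF r] by simp
    then have "card {M \<in> matchings r n. z P M \<ge> k} = 0" using bad_bound[OF r, where n=n and P=P and k=k] by simp
    then show ?thesis using bound_pos xpos by simp
  next
    case True
    have k0: "k > 0" using k by simp
    define b where "b = fact r * exp (real r) * real n / real k ^ r"
    have "real (card {M \<in> matchings r n. z P M \<ge> k}) \<le> real (card (Kset r n k P) * g r (n - k))"
      using bad_bound[OF r, where n=n and P=P and k=k] by linarith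
    also have "\<dots> \<le> real (((r*n) choose (r*k)) * r^(r*k) * g r (n - k))"
      using card_K[OF r rec, where n=n and k=k] by (simp del: of_nat_mult)
    finally have cb: "real (card {M \<in> matchings r n. z P M \<ge> k}) / real (card (matchings r n))
        \<le> real ((r*n) choose (r*k)) * real r ^ (r*k) * real (g r (n-k)) / real (g r n)"
      using gA gpos by (simp add: divide_right_mono)
    also have "\<dots> \<le> b ^ k" unfolding b_def by (rule ratio_bound[OF r True k0])
    also have "\<dots> \<le> (1/2) ^ k"
    proof (rule power_mono)
      show "0 \<le> b" unfolding b_def by simp
      have "x ^ r = C ^ r * real n"
      proof -
        have "(real n powr (1 / real r)) ^ r = real n powr (real r * (1 / real r))"
          using npos by (simp add: powr_power)
        also have "\<dots> = real n" using r npos by simp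
        finally show ?thesis using x by (simp add: power_mult_distrib)
      qed
      moreover have "C ^ r \<ge> C" using C1 r by (metis One_nat_def Suc_leI power_increasing power_one_right)
      moreover have "real k ^ r \<ge> x ^ r" using kx xpos by (intro power_mono) auto
      moreover have "C * real n \<le> C ^ r * real n"
        by (rule mult_right_mono) (use \<open>C ^ r \<ge> C\<close> npos in auto)
      ultimately have kr: "real k ^ r \<ge> C * real n" by linarith
      have "b \<le> fact r * exp (real r) * real n / (C * real n)"
        unfolding b_def
      proof (rule divide_left_mono[OF kr])
        show "0 \<le> fact r * exp (real r) * real n" by simp
        show "0 < real k ^ r * (C * real n)" using Cpos npos k0 by simp
      qed
      also have "\<dots> = 1/2" using C npos by simp
      finally show "b \<le> 1/2" .
    qed
    also have "\<dots> \<le> 1 / real k"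
    proof -
      have "real k < 2 ^ k" using less_exp[of k] by (metis of_nat_less_iff of_nat_numeral of_nat_power)
      then show ?thesis using k0 by (simp add: power_one_over field_simps)
    qed
    also have "\<dots> \<le> 1 / x" using kx xpos by (simp add: frac_le)
    finally show ?thesis using bound_pos by simp
  qed
qed

lemma thr:
  fixes x :: real and zz :: nat
  assumes "x \<ge> 0"
  shows "(real zz \<le> x) \<longleftrightarrow> \<not> (nat \<lfloor>x\<rfloor> + 1 \<le> zz)"
proof -
  obtain m where m: "\<lfloor>x\<rfloor> = int m" using assms by (metis nonneg_int_cases zero_le_floor)
  have "(real zz \<le> x) \<longleftrightarrow> int zz \<le> \<lfloor>x\<rfloor>" by (simp add: le_floor_iff)
  also have "\<dots> \<longleftrightarrow> \<not> (m + 1 \<le> zz)" using m by auto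
  finally show ?thesis using m by simp
qed

theorem mainTheorem7:
  fixes r :: nat and P :: "nat set set set"
  assumes "r \<ge> 2"
    and "P \<subseteq> patterns r"
    and "clique_family_reconstructible r P"
  shows "\<exists>C::real. C > 0 \<and>
    (\<lambda>n. prob_RM r n (\<lambda>M. real (z P M) \<le> C * real n powr (1 / real r)))
      \<longlonglongrightarrow> 1"
proof -
  have r: "r > 0" using assms(1) by simp
  define C where "C = 2 * fact r * exp (real r)"
  have Cpos: "C > 0" unfolding C_def by simp
  define x where "x n = C * real n powr (1 / real r)" for n
  define k where "k n = nat \<lfloor>x n\<rfloor> + 1" for n
  define q where "q n = real (card {M \<in> matchings r n. z P M \<ge> k n}) / real (card (matchings r n))" for n
  have prob: "prob_RM r n (\<lambda>M. real (z P M) \<le> C * real n powr (1 / real r)) = 1 - q n" for n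
  proof -
    have fin: "finite (matchings r n)" using matchings_pm[OF r] finite_pm by simp
    have cA: "card (matchings r n) = g r n"
      using card_pm[OF r, of "{0..<r*n}" n] matchings_pm[OF r] by simp
    have cpos: "real (card (matchings r n)) > 0" using cA g_pos[OF r] by simp
    have xnn: "x n \<ge> 0" unfolding x_def using Cpos by simp
    have eq: "{M \<in> matchings r n. real (z P M) \<le> C * real n powr (1 / real r)}
        = matchings r n - {M \<in> matchings r n. z P M \<ge> k n}"
      using thr[OF xnn] unfolding k_def x_def by auto
    have "card (matchings r n - {M \<in> matchings r n. z P M \<ge> k n})
        = card (matchings r n) - card {M \<in> matchings r n. z P M \<ge> k n}"
      by (rule card_Diff_subset) (use fin in auto)
    moreover have "card {M \<in> matchings r n. z P M \<ge> k n} \<le> card (matchings r n)"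
      by (rule card_mono[OF fin]) auto
    ultimately have "real (card {M \<in> matchings r n. real (z P M) \<le> C * real n powr (1 / real r)})
        = real (card (matchings r n)) - real (card {M \<in> matchings r n. z P M \<ge> k n})"
      unfolding eq by simp
    then show ?thesis unfolding prob_RM_def q_def using cpos by (simp add: field_simps)
  qed
  have lim0: "(\<lambda>n. (1 / C) * real n powr (- 1 / real r)) \<longlonglongrightarrow> 0"
  proof -
    have "(\<lambda>n. real n powr (- 1 / real r)) \<longlonglongrightarrow> 0"
      by (rule tendsto_neg_powr) (use r in \<open>simp_all add: filterlim_real_sequentially\<close>)
    then show ?thesis by (rule tendsto_mult_right_zero)
  qed
  have "q \<longlonglongrightarrow> 0"
  proof (rule tendsto_sandwich[OF _ _ tendsto_const lim0])
    show "\<forall>\<^sub>F n in sequentially. 0 \<le> q n" unfolding q_def by simp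
    show "\<forall>\<^sub>F n in sequentially. q n \<le> 1 / C * real n powr (- 1 / real r)"
    proof (rule eventually_sequentiallyI[of 1])
      fix n :: nat assume "n \<ge> 1"
      then show "q n \<le> 1 / C * real n powr (- 1 / real r)"
        unfolding q_def using q_bound[OF r assms(3) C_def x_def k_def] by blast
    qed
  qed
  then have "(\<lambda>n. 1 - q n) \<longlonglongrightarrow> 1 - 0" by (intro tendsto_diff tendsto_const)
  then show ?thesis using Cpos prob by (intro exI[of _ C]) simp
qed

end
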